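(* Let $A$ be a sub-tree of $T$, $I\subseteq\mathcal{I}_A$, and let $I=I'\cup I''$ with $I'\cap I''=\emptyset$. For every $S\in\mathcal{M}_A^I$, setting $S'=S\cap V_A^{I'}$ and $S''=S\cap V_A^{I''}$, we have $S'\in\mathcal{M}_A^{I'}$ and $S''\in\mathcal{M}_A^{I''}$. In particular, $\mathcal{M}_A$ is contained in $\{S_0\cup S_1\cup\dots\cup S_m: S_i\in\mathcal{M}_A^{\{i\}}\}$.
   Context: Setting. $T$ is a finite tree rooted at $r_T$, node set $V_T$; every edge $e$ has weight $w_e\ge 0$. Every node $v$ has a probability $\pi_v\in(0,1]$ and a prize $p_v\in\mathbb{R}$. $d(v)$ is the total weight of the path from $r_T$ to $v$. A random set $\omega\subseteq V_T$ contains each node $v$ independently with probability $\pi_v$. For $S\subseteq V_T$, $P(S)=1-\prod_{s\in S}(1-\pi_s)$ ($P(\emptyset)=0$). For a node $a$, the sub-tree $A$ rooted at $r_A=a$ consists of $a$ and all its descendants, with node set $V_A$; if $a$ has children $c_1,\dots,c_m$, then $A_i$ ($1\le i\le m$) is the sub-tree rooted at $c_i$, $A_0$ is the sub-tree consisting of the single node $r_A$, $\mathcal{I}_A=\{0,1,\dots,m\}$, and $V_A^I=\bigcup_{i\in I}V_{A_i}$ for $I\subseteq\mathcal{I}_A$. For $Q\subseteq V_T$, $W(Q)$ is the total weight of the edges lying on at least one path from $r_T$ to a node of $Q$. For $S\subseteq V_A$ and $x\le d(r_A)$ the expected profit is $G(S,x)=\sum_{s\in S}p_s\pi_s-\mathbb{E}[W(S\cap\omega)]+x\,P(S)$.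 Characteristic function. For a sub-tree $A$, $I\subseteq\mathcal{I}_A$ and $x\in[0,d(r_A)]$, $f_A^I(x)=\max_{S\subseteq V_A^I}G(S,x)$, and $f_A=f_A^{\mathcal{I}_A}$. A set $S\subseteq V_A^I$ with $G(S,x)=f_A^I(x)$ is an optimal set (for $f_A^I$) at $x$. The matryoshka $\mathcal{M}_A^I$ is the family of all $S\subseteq V_A^I$ such that for some $x\in[0,d(r_A)]$, $S$ is an optimal set at $x$ and no proper superset of $S$ contained in $V_A^I$ is optimal at $x$; $\mathcal{M}_A=\mathcal{M}_A^{\mathcal{I}_A}$. *)

theory Defs
  imports Complex_Main
begin

text \<open>A finite rooted tree with parent pointers. Every non-root node v carries the
  edge (v, parent v), whose weight is weight v. Prize, probability per node.\<close>

record 'a wtree =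
  nodes  :: "'a set"
  root   :: 'a
  parent :: "'a \<Rightarrow> 'a"
  weight :: "'a \<Rightarrow> real"
  prob   :: "'a \<Rightarrow> real"
  prize  :: "'a \<Rightarrow> real"

definition anc :: "'a wtree \<Rightarrow> 'a \<Rightarrow> 'a set" where
  "anc T v = {(parent T ^^ k) v | k. True}"

definition is_wtree :: "'a wtree \<Rightarrow> bool" where
  "is_wtree T \<longleftrightarrow> finite (nodes T) \<and> root T \<in> nodes T \<and> parent T (root T) = root T
     \<and> (\<forall>v\<in>nodes T. parent T v \<in> nodes T)
     \<and> (\<forall>v\<in>nodes T. \<exists>k. (parent T ^^ k) v = root T)
     \<and> (\<forall>v\<in>nodes T. v \<noteq> root T \<longrightarrow> weight T v \<ge> 0)
     \<and> (\<forall>v\<in>nodes T. 0 < prob T v \<and> prob T v \<le> 1)"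

definition subtree :: "'a wtree \<Rightarrow> 'a \<Rightarrow> 'a set" where
  "subtree T a = {u \<in> nodes T. a \<in> anc T u}"

definition children :: "'a wtree \<Rightarrow> 'a \<Rightarrow> 'a set" where
  "children T a = {c \<in> nodes T. c \<noteq> root T \<and> parent T c = a}"

text \<open>Index set I_A: None plays the role of index 0 (the single-node sub-tree A_0),
  Some c the role of the index of child c.\<close>
definition idx :: "'a wtree \<Rightarrow> 'a \<Rightarrow> 'a option set" where
  "idx T a = insert None (Some ` children T a)"

definition blk :: "'a wtree \<Rightarrow> 'a \<Rightarrow> 'a option \<Rightarrow> 'a set" where
  "blk T a i = (case i of None \<Rightarrow> {a} | Some c \<Rightarrow> subtree T c)"

definition VI :: "'a wtree \<Rightarrow> 'a \<Rightarrow> 'a option set \<Rightarrow> 'a set" where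
  "VI T a I = (\<Union>i\<in>I. blk T a i)"

definition Wt :: "'a wtree \<Rightarrow> 'a set \<Rightarrow> real" where
  "Wt T Q = sum (weight T) {u \<in> nodes T. u \<noteq> root T \<and> (\<exists>q\<in>Q. u \<in> anc T q)}"

definition dist :: "'a wtree \<Rightarrow> 'a \<Rightarrow> real" where
  "dist T v = Wt T {v}"

definition PrS :: "'a wtree \<Rightarrow> 'a set \<Rightarrow> real" where
  "PrS T S = 1 - (\<Prod>s\<in>S. 1 - prob T s)"

text \<open>E[W(S \<inter> \<omega>)], \<omega> containing each node v independently with probability prob v.\<close>
definition EW :: "'a wtree \<Rightarrow> 'a set \<Rightarrow> real" where
  "EW T S = (\<Sum>X\<in>Pow S. (\<Prod>x\<in>X. prob T x) * (\<Prod>x\<in>S - X. 1 - prob T x) * Wt T X)"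

definition G :: "'a wtree \<Rightarrow> 'a set \<Rightarrow> real \<Rightarrow> real" where
  "G T S x = (\<Sum>s\<in>S. prize T s * prob T s) - EW T S + x * PrS T S"

definition optimal :: "'a wtree \<Rightarrow> 'a \<Rightarrow> 'a option set \<Rightarrow> 'a set \<Rightarrow> real \<Rightarrow> bool" where
  "optimal T a I S x \<longleftrightarrow> S \<subseteq> VI T a I \<and> (\<forall>S'. S' \<subseteq> VI T a I \<longrightarrow> G T S' x \<le> G T S x)"

definition matr :: "'a wtree \<Rightarrow> 'a \<Rightarrow> 'a option set \<Rightarrow> 'a set set" where
  "matr T a I = {S. \<exists>x. 0 \<le> x \<and> x \<le> dist T a \<and> optimal T a I S x
                      \<and> \<not> (\<exists>S'. S \<subset> S' \<and> optimal T a I S' x)}"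

end

theory Submission
  imports Defs
begin


lemma funpow_shift: "(f ^^ m) (f v) = (f ^^ Suc m) v"
  by (metis comp_apply funpow_Suc_right)

lemma anc_self: "v \<in> anc T v"
  unfolding anc_def by (auto intro: exI[of _ 0])

lemma anc_parent: "anc T v = insert v (anc T (parent T v))"
proof
  show "anc T v \<subseteq> insert v (anc T (parent T v))"
  proof
    fix u assume "u \<in> anc T v"
    then obtain k where u: "u = (parent T ^^ k) v" unfolding anc_def by auto
    show "u \<in> insert v (anc T (parent T v))"
    proof (cases k)
      case 0 then show ?thesis using u by simp
    next
      case (Suc m) then have "u = (parent T ^^ m) (parent T v)" using u funpow_shift by metis
      then show ?thesis unfolding anc_def by auto
    qed
  qed
next
  show "insert v (anc T (parent T v)) \<subseteq> anc T v"
  proof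
    fix u assume "u \<in> insert v (anc T (parent T v))"
    then show "u \<in> anc T v"
    proof
      assume "u = v" then show ?thesis using anc_self by metis
    next
      assume "u \<in> anc T (parent T v)"
      then obtain m where "u = (parent T ^^ m) (parent T v)" unfolding anc_def by auto
      then have "u = (parent T ^^ Suc m) v" using funpow_shift by metis
      then show ?thesis unfolding anc_def by blast
    qed
  qed
qed

lemma anc_trans: "u \<in> anc T v \<Longrightarrow> v \<in> anc T w \<Longrightarrow> u \<in> anc T w"
proof -
  assume "u \<in> anc T v" "v \<in> anc T w"
  then obtain m n where "u = (parent T ^^ m) v" "v = (parent T ^^ n) w" unfolding anc_def by auto
  then have "u = (parent T ^^ (m + n)) w" by (simp add: funpow_add)
  then show ?thesis unfolding anc_def by blast
qed

lemma anc_cmp: "u \<in> anc T q \<Longrightarrow> c \<in> anc T q \<Longrightarrow> u \<in> anc T c \<or> c \<in> anc T u"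
proof -
  assume "u \<in> anc T q" "c \<in> anc T q"
  then obtain m n where m: "u = (parent T ^^ m) q" and n: "c = (parent T ^^ n) q" unfolding anc_def by auto
  show ?thesis
  proof (cases "n \<le> m")
    case True
    then have "m = (m - n) + n" by simp
    then have "u = (parent T ^^ (m - n)) c" using m n by (metis funpow_add comp_apply)
    then show ?thesis unfolding anc_def by blast
  next
    case False
    then have "n = (n - m) + m" by simp
    then have "c = (parent T ^^ (n - m)) u" using m n by (metis funpow_add comp_apply)
    then show ?thesis unfolding anc_def by blast
  qed
qed

lemma funpow_fix: "f r = r \<Longrightarrow> (f ^^ i) r = r"
  by (induction i) auto

lemma acyclic:
  assumes "is_wtree T" "v \<in> nodes T" "v \<noteq> root T"
  shows "v \<notin> anc T (parent T v)"
proof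
  assume "v \<in> anc T (parent T v)"
  then obtain k where k: "v = (parent T ^^ k) (parent T v)" unfolding anc_def by auto
  define j where "j = Suc k"
  have vj: "(parent T ^^ j) v = v" using k unfolding j_def using funpow_shift by metis
  have mj: "(parent T ^^ (m * j)) v = v" for m
  proof (induction m)
    case 0 then show ?case by simp
  next
    case (Suc m)
    have "(parent T ^^ (Suc m * j)) v = (parent T ^^ j) ((parent T ^^ (m * j)) v)"
      by (simp add: funpow_add)
    then show ?case using Suc vj by simp
  qed
  obtain n where n: "(parent T ^^ n) v = root T" using assms unfolding is_wtree_def by blast
  have rf: "parent T (root T) = root T" using assms unfolding is_wtree_def by blast
  have "n \<le> n * j" unfolding j_def by simp
  then have "n * j = (n * j - n) + n" by simp
  then have "(parent T ^^ (n * j)) v = (parent T ^^ (n * j - n)) ((parent T ^^ n) v)"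
    by (metis funpow_add comp_apply)
  also have "\<dots> = root T" using n funpow_fix[of "parent T" "root T", OF rf] by simp
  finally show False using mj[of n] assms(3) by simp
qed

lemma children_D: "c \<in> children T a \<Longrightarrow> c \<in> nodes T \<and> c \<noteq> root T \<and> parent T c = a"
  unfolding children_def by auto

lemma child_not_anc:
  assumes "is_wtree T" "c \<in> children T a"
  shows "c \<notin> anc T a"
  using acyclic[OF assms(1)] children_D[OF assms(2)] by metis

lemma anc_child: "c \<in> children T a \<Longrightarrow> anc T c = insert c (anc T a)"
  using anc_parent children_D by metis

lemma two_children_aux:
  assumes "is_wtree T" "c1 \<in> children T a" "c2 \<in> children T a" "c1 \<noteq> c2" "c1 \<in> anc T c2"
  shows False
  using assms anc_child[OF assms(3)] child_not_anc[OF assms(1,2)] by auto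

lemma two_children:
  assumes "is_wtree T" "c1 \<in> children T a" "c2 \<in> children T a" "c1 \<noteq> c2"
    "c1 \<in> anc T q" "c2 \<in> anc T q"
  shows False
  using anc_cmp[OF assms(5,6)] two_children_aux[OF assms(1-4)] two_children_aux[OF assms(1,3,2)] assms(4)
  by metis

lemma idx_Some: "Some c \<in> idx T a \<Longrightarrow> c \<in> children T a"
  unfolding idx_def by auto

lemma blk_anc:
  assumes "i \<in> idx T a" "q \<in> blk T a i"
  shows "a \<in> anc T q"
proof (cases i)
  case None then show ?thesis using assms anc_self by (simp add: blk_def)
next
  case (Some c)
  then have c: "c \<in> children T a" using assms idx_Some by simp
  have "c \<in> anc T q" using assms Some by (simp add: blk_def subtree_def)
  moreover have "a \<in> anc T c" using anc_child[OF c] anc_self[of a T] by blast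
  ultimately show ?thesis using anc_trans by metis
qed

lemma blk_cross:
  assumes "is_wtree T" "i \<in> idx T a" "j \<in> idx T a" "i \<noteq> j"
    "q1 \<in> blk T a i" "q2 \<in> blk T a j" "u \<in> anc T q1" "u \<in> anc T q2"
  shows "u \<in> anc T a"
proof (cases i)
  case None then show ?thesis using assms by (simp add: blk_def)
next
  case (Some c1)
  show ?thesis
  proof (cases j)
    case None then show ?thesis using assms by (simp add: blk_def)
  next
    case (Some c2)
    have c1: "c1 \<in> children T a" using assms \<open>i = Some c1\<close> idx_Some by simp
    have c2: "c2 \<in> children T a" using assms Some idx_Some by simp
    have ne: "c1 \<noteq> c2" using assms Some \<open>i = Some c1\<close> by simp
    have a1: "c1 \<in> anc T q1" using assms \<open>i = Some c1\<close> by (simp add: blk_def subtree_def)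
    have a2: "c2 \<in> anc T q2" using assms Some by (simp add: blk_def subtree_def)
    from anc_cmp[OF assms(7) a1] show ?thesis
    proof
      assume "u \<in> anc T c1"
      then have "u = c1 \<or> u \<in> anc T a" using anc_child[OF c1] by auto
      then show ?thesis
      proof
        assume "u = c1"
        then show ?thesis using two_children[OF assms(1) c1 c2 ne _ a2] assms(8) by blast
      qed
    next
      assume "c1 \<in> anc T u"
      then have "c1 \<in> anc T q2" using assms(8) anc_trans by metis
      then show ?thesis using two_children[OF assms(1) c1 c2 ne _ a2] by blast
    qed
  qed
qed

lemma blk_disj:
  assumes "is_wtree T" "i \<in> idx T a" "j \<in> idx T a" "i \<noteq> j"
    "q \<in> blk T a i" "q \<in> blk T a j"
  shows False
proof -
  have qa: "q \<in> anc T a" using blk_cross[OF assms(1-6)] anc_self by metis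
  have "\<exists>c. (i = Some c \<and> q \<in> blk T a i) \<or> (j = Some c \<and> q \<in> blk T a j)"
    using assms(4,5,6) by (cases i; cases j) auto
  then obtain c where "(i = Some c \<and> q \<in> blk T a i) \<or> (j = Some c \<and> q \<in> blk T a j)" by blast
  then have c: "c \<in> children T a" and "c \<in> anc T q"
    using assms idx_Some by (auto simp: blk_def subtree_def)
  then have "c \<in> anc T a" using qa anc_trans by metis
  then show False using child_not_anc[OF assms(1) c] by simp
qed

lemma VI_cross:
  assumes "is_wtree T" "I1 \<subseteq> idx T a" "I2 \<subseteq> idx T a" "I1 \<inter> I2 = {}"
    "q1 \<in> VI T a I1" "q2 \<in> VI T a I2" "u \<in> anc T q1" "u \<in> anc T q2"
  shows "u \<in> anc T a"
proof -
  obtain i where "i \<in> I1" "q1 \<in> blk T a i" using assms(5) unfolding VI_def by auto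
  moreover obtain j where "j \<in> I2" "q2 \<in> blk T a j" using assms(6) unfolding VI_def by auto
  ultimately show ?thesis using blk_cross[OF assms(1) _ _ _ _ _ assms(7,8)] assms(2-4) by blast
qed

lemma VI_disj:
  assumes "is_wtree T" "I1 \<subseteq> idx T a" "I2 \<subseteq> idx T a" "I1 \<inter> I2 = {}"
  shows "VI T a I1 \<inter> VI T a I2 = {}"
proof (rule equals0I)
  fix q assume "q \<in> VI T a I1 \<inter> VI T a I2"
  then obtain i j where ij: "i \<in> I1" "q \<in> blk T a i" "j \<in> I2" "q \<in> blk T a j"
    unfolding VI_def by blast
  have "i \<in> idx T a" "j \<in> idx T a" using ij assms(2,3) by auto
  moreover have "i \<noteq> j" using ij assms(4) by auto
  ultimately show False using blk_disj[OF assms(1)] ij(2,4) by blast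
qed

lemma VI_anc:
  assumes "I \<subseteq> idx T a" "q \<in> VI T a I" "u \<in> anc T a"
  shows "u \<in> anc T q"
proof -
  obtain i where i: "i \<in> I" "q \<in> blk T a i" using assms(2) unfolding VI_def by blast
  have "a \<in> anc T q" using blk_anc[OF subsetD[OF assms(1) i(1)] i(2)] .
  then show ?thesis using anc_trans assms(3) by metis
qed

lemma VI_nodes:
  assumes "a \<in> nodes T" shows "VI T a I \<subseteq> nodes T"
  using assms unfolding VI_def blk_def subtree_def by (auto split: option.splits)

lemma VI_Un: "VI T a (I1 \<union> I2) = VI T a I1 \<union> VI T a I2"
  unfolding VI_def by auto



definition wt :: "'a wtree \<Rightarrow> 'a set \<Rightarrow> 'a set \<Rightarrow> real" where
  "wt T S X = (\<Prod>x\<in>X. prob T x) * (\<Prod>x\<in>S - X. 1 - prob T x)"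

definition ind :: "'a set \<Rightarrow> real" where "ind X = (if X = {} then 0 else 1)"

lemma EW_wt: "EW T S = (\<Sum>X\<in>Pow S. wt T S X * Wt T X)"
  unfolding EW_def wt_def by simp

lemma wt_sum1: "finite S \<Longrightarrow> (\<Sum>X\<in>Pow S. wt T S X) = 1"
  using prod_add[of S "prob T" "\<lambda>x. 1 - prob T x"] unfolding wt_def by simp

lemma wt_ind: assumes "finite S" shows "(\<Sum>X\<in>Pow S. wt T S X * ind X) = PrS T S"
proof -
  have e: "{} \<in> Pow S" by simp
  have f: "finite (Pow S)" using assms by simp
  have "(\<Sum>X\<in>Pow S. wt T S X * ind X) = (\<Sum>X\<in>Pow S - {{}}. wt T S X * ind X)"
    using sum.remove[OF f e, of "\<lambda>X. wt T S X * ind X"] by (simp add: ind_def)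
  also have "\<dots> = (\<Sum>X\<in>Pow S - {{}}. wt T S X)"
    by (rule sum.cong) (auto simp: ind_def)
  also have "\<dots> = 1 - wt T S {}"
    using sum.remove[OF f e, of "wt T S"] wt_sum1[OF assms, of T] by simp
  also have "\<dots> = PrS T S" unfolding wt_def PrS_def by simp
  finally show ?thesis .
qed

lemma wt_union:
  assumes "finite S1" "finite S2" "S1 \<inter> S2 = {}" "X1 \<subseteq> S1" "X2 \<subseteq> S2"
  shows "wt T (S1 \<union> S2) (X1 \<union> X2) = wt T S1 X1 * wt T S2 X2"
proof -
  have fx: "finite X1" "finite X2" using finite_subset[OF assms(4,1)] finite_subset[OF assms(5,2)] by auto
  have d: "(S1 \<union> S2) - (X1 \<union> X2) = (S1 - X1) \<union> (S2 - X2)" using assms by auto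
  have "(\<Prod>x\<in>X1 \<union> X2. prob T x) = (\<Prod>x\<in>X1. prob T x) * (\<Prod>x\<in>X2. prob T x)"
    using prod.union_disjoint[OF fx] assms by auto
  moreover have "(\<Prod>x\<in>(S1 \<union> S2) - (X1 \<union> X2). 1 - prob T x)
     = (\<Prod>x\<in>S1 - X1. 1 - prob T x) * (\<Prod>x\<in>S2 - X2. 1 - prob T x)"
    unfolding d using prod.union_disjoint[of "S1 - X1" "S2 - X2"] assms by auto
  ultimately show ?thesis unfolding wt_def by (simp add: algebra_simps)
qed

lemma sum_Pow_split:
  assumes "finite S1" "finite S2" "S1 \<inter> S2 = {}"
  shows "(\<Sum>X\<in>Pow (S1 \<union> S2). f X) = (\<Sum>X1\<in>Pow S1. \<Sum>X2\<in>Pow S2. f (X1 \<union> X2))"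
proof -
  let ?h = "\<lambda>(X1, X2). X1 \<union> X2"
  have inj: "inj_on ?h (Pow S1 \<times> Pow S2)"
  proof (rule inj_onI, clarify)
    fix X1 X2 Y1 Y2 assume "X1 \<subseteq> S1" "X2 \<subseteq> S2" "Y1 \<subseteq> S1" "Y2 \<subseteq> S2" "X1 \<union> X2 = Y1 \<union> Y2"
    then show "X1 = Y1 \<and> X2 = Y2" using assms(3) by blast
  qed
  have im: "?h ` (Pow S1 \<times> Pow S2) = Pow (S1 \<union> S2)"
  proof
    show "?h ` (Pow S1 \<times> Pow S2) \<subseteq> Pow (S1 \<union> S2)" by auto
    show "Pow (S1 \<union> S2) \<subseteq> ?h ` (Pow S1 \<times> Pow S2)"
    proof
      fix X assume "X \<in> Pow (S1 \<union> S2)"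
      then have "X = ?h (X \<inter> S1, X \<inter> S2)" "(X \<inter> S1, X \<inter> S2) \<in> Pow S1 \<times> Pow S2" by auto
      then show "X \<in> ?h ` (Pow S1 \<times> Pow S2)" by blast
    qed
  qed
  have "(\<Sum>X\<in>Pow (S1 \<union> S2). f X) = (\<Sum>p\<in>Pow S1 \<times> Pow S2. f (?h p))"
    using sum.reindex[OF inj, of f] im by simp
  also have "\<dots> = (\<Sum>X1\<in>Pow S1. \<Sum>X2\<in>Pow S2. f (X1 \<union> X2))"
    by (simp add: sum.cartesian_product split_def)
  finally show ?thesis .
qed

lemma EW_split:
  assumes "finite S1" "finite S2" "S1 \<inter> S2 = {}"
    and W: "\<And>X1 X2. X1 \<subseteq> S1 \<Longrightarrow> X2 \<subseteq> S2 \<Longrightarrow>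
         Wt T (X1 \<union> X2) = Wt T X1 + Wt T X2 - d * ind X1 * ind X2"
  shows "EW T (S1 \<union> S2) = EW T S1 + EW T S2 - d * PrS T S1 * PrS T S2"
proof -
  have "EW T (S1 \<union> S2) = (\<Sum>X1\<in>Pow S1. \<Sum>X2\<in>Pow S2. wt T (S1 \<union> S2) (X1 \<union> X2) * Wt T (X1 \<union> X2))"
    unfolding EW_wt using sum_Pow_split[OF assms(1-3)] by blast
  also have "\<dots> = (\<Sum>X1\<in>Pow S1. \<Sum>X2\<in>Pow S2.
        (wt T S1 X1 * Wt T X1) * wt T S2 X2 + wt T S1 X1 * (wt T S2 X2 * Wt T X2)
        - d * ((wt T S1 X1 * ind X1) * (wt T S2 X2 * ind X2)))"
    by (intro sum.cong refl) (simp add: wt_union[OF assms(1-3)] W algebra_simps)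
  also have "\<dots> = (\<Sum>X1\<in>Pow S1. \<Sum>X2\<in>Pow S2. (wt T S1 X1 * Wt T X1) * wt T S2 X2)
     + (\<Sum>X1\<in>Pow S1. \<Sum>X2\<in>Pow S2. wt T S1 X1 * (wt T S2 X2 * Wt T X2))
     - d * (\<Sum>X1\<in>Pow S1. \<Sum>X2\<in>Pow S2. (wt T S1 X1 * ind X1) * (wt T S2 X2 * ind X2))"
    by (simp only: sum.distrib sum_subtractf sum_distrib_left)
  also have "\<dots> = (\<Sum>X1\<in>Pow S1. wt T S1 X1 * Wt T X1) * (\<Sum>X2\<in>Pow S2. wt T S2 X2)
       + (\<Sum>X1\<in>Pow S1. wt T S1 X1) * (\<Sum>X2\<in>Pow S2. wt T S2 X2 * Wt T X2)
       - d * ((\<Sum>X1\<in>Pow S1. wt T S1 X1 * ind X1) * (\<Sum>X2\<in>Pow S2. wt T S2 X2 * ind X2))"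
    by (simp only: sum_product)
  also have "\<dots> = EW T S1 + EW T S2 - d * PrS T S1 * PrS T S2"
    using wt_sum1[OF assms(1)] wt_sum1[OF assms(2)] wt_ind[OF assms(1)] wt_ind[OF assms(2)]
    unfolding EW_wt by simp
  finally show ?thesis .
qed



lemma Wt_split:
  assumes "is_wtree T" "a \<in> nodes T" "I1 \<subseteq> idx T a" "I2 \<subseteq> idx T a" "I1 \<inter> I2 = {}"
    "X1 \<subseteq> VI T a I1" "X2 \<subseteq> VI T a I2"
  shows "Wt T (X1 \<union> X2) = Wt T X1 + Wt T X2 - dist T a * ind X1 * ind X2"
proof -
  define N where "N X = {u \<in> nodes T. u \<noteq> root T \<and> (\<exists>q\<in>X. u \<in> anc T q)}" for X
  have WN: "Wt T X = sum (weight T) (N X)" for X unfolding Wt_def N_def by simp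
  have fin: "finite (N X)" for X
    using assms(1) unfolding is_wtree_def N_def by auto
  have un: "N (X1 \<union> X2) = N X1 \<union> N X2" unfolding N_def by auto
  have ui: "sum (weight T) (N X1 \<union> N X2) + sum (weight T) (N X1 \<inter> N X2)
      = sum (weight T) (N X1) + sum (weight T) (N X2)"
    by (rule sum.union_inter[OF fin fin])
  show ?thesis
  proof (cases "X1 = {} \<or> X2 = {}")
    case True
    then have "N X1 = {} \<or> N X2 = {}" unfolding N_def by auto
    then have "sum (weight T) (N X1 \<inter> N X2) = 0" by auto
    then show ?thesis using True ui un unfolding WN ind_def by auto
  next
    case False
    then obtain q1 q2 where q: "q1 \<in> X1" "q2 \<in> X2" by blast
    have "N X1 \<inter> N X2 = N {a}"
    proof
      show "N X1 \<inter> N X2 \<subseteq> N {a}"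
        using VI_cross[OF assms(1,3,4,5)] assms(6,7) unfolding N_def by blast
      show "N {a} \<subseteq> N X1 \<inter> N X2"
        using VI_anc[OF assms(3)] VI_anc[OF assms(4)] q assms(6,7) unfolding N_def by blast
    qed
    then show ?thesis using False ui un unfolding WN ind_def dist_def by auto
  qed
qed

lemma PrS_bounds:
  assumes "is_wtree T" "S \<subseteq> nodes T"
  shows "0 \<le> PrS T S" "PrS T S \<le> 1"
proof -
  have b: "0 \<le> 1 - prob T s \<and> 1 - prob T s \<le> 1" if "s \<in> S" for s
  proof -
    have "s \<in> nodes T" using assms(2) that by blast
    then have "0 < prob T s \<and> prob T s \<le> 1" using assms(1) unfolding is_wtree_def by blast
    then show ?thesis by linarith
  qed
  have "(\<Prod>s\<in>S. 1 - prob T s) \<le> 1" by (rule prod_le_1) (use b in auto)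
  then show "0 \<le> PrS T S" unfolding PrS_def by simp
  have "0 \<le> (\<Prod>s\<in>S. 1 - prob T s)" by (rule prod_nonneg) (use b in auto)
  then show "PrS T S \<le> 1" unfolding PrS_def by simp
qed

lemma G_split:
  assumes "is_wtree T" "a \<in> nodes T" "I1 \<subseteq> idx T a" "I2 \<subseteq> idx T a" "I1 \<inter> I2 = {}"
    "S1 \<subseteq> VI T a I1" "S2 \<subseteq> VI T a I2"
  shows "G T (S1 \<union> S2) x = G T S1 x + G T S2 x + (dist T a - x) * PrS T S1 * PrS T S2"
proof -
  have fn: "finite (nodes T)" using assms(1) unfolding is_wtree_def by auto
  have f1: "finite S1" using finite_subset[OF _ fn] assms(6) VI_nodes[OF assms(2)] by blast
  have f2: "finite S2" using finite_subset[OF _ fn] assms(7) VI_nodes[OF assms(2)] by blast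
  have dj: "S1 \<inter> S2 = {}" using VI_disj[OF assms(1,3,4,5)] assms(6,7) by blast
  have ew: "EW T (S1 \<union> S2) = EW T S1 + EW T S2 - dist T a * PrS T S1 * PrS T S2"
    by (rule EW_split[OF f1 f2 dj]) (rule Wt_split[OF assms(1-5)], use assms(6,7) in auto)
  have ps: "(\<Sum>s\<in>S1 \<union> S2. prize T s * prob T s) = (\<Sum>s\<in>S1. prize T s * prob T s) + (\<Sum>s\<in>S2. prize T s * prob T s)"
    by (rule sum.union_disjoint[OF f1 f2 dj])
  have pp: "(\<Prod>s\<in>S1 \<union> S2. 1 - prob T s) = (\<Prod>s\<in>S1. 1 - prob T s) * (\<Prod>s\<in>S2. 1 - prob T s)"
    by (rule prod.union_disjoint[OF f1 f2 dj])
  show ?thesis unfolding G_def ew ps PrS_def pp by (simp add: algebra_simps)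
qed

lemma half:
  assumes "is_wtree T" "a \<in> nodes T" "I1 \<subseteq> idx T a" "I2 \<subseteq> idx T a" "I1 \<inter> I2 = {}"
    "S \<in> matr T a (I1 \<union> I2)"
  shows "S \<inter> VI T a I1 \<in> matr T a I1"
proof -
  obtain x where x: "0 \<le> x" "x \<le> dist T a" and opt: "optimal T a (I1 \<union> I2) S x"
    and mx: "\<not> (\<exists>S'. S \<subset> S' \<and> optimal T a (I1 \<union> I2) S' x)"
    using assms(6) unfolding matr_def by blast
  define S1 where "S1 = S \<inter> VI T a I1"
  define S2 where "S2 = S \<inter> VI T a I2"
  have SS: "S = S1 \<union> S2" using opt unfolding optimal_def S1_def S2_def VI_Un by blast
  have s1: "S1 \<subseteq> VI T a I1" and s2: "S2 \<subseteq> VI T a I2" unfolding S1_def S2_def by auto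
  have n2: "S2 \<subseteq> nodes T" using s2 VI_nodes[OF assms(2)] by blast
  define x' where "x' = x + (dist T a - x) * PrS T S2"
  have x': "0 \<le> x'" "x' \<le> dist T a"
    using PrS_bounds[OF assms(1) n2] x unfolding x'_def
    by (simp_all add: mult_nonneg_nonneg) (metis add.commute diff_ge_0_iff_ge le_diff_eq mult_left_le)
  have key: "G T (T1 \<union> S2) x = G T T1 x' + G T S2 x" if "T1 \<subseteq> VI T a I1" for T1
  proof -
    have "G T (T1 \<union> S2) x = G T T1 x + G T S2 x + (dist T a - x) * PrS T T1 * PrS T S2"
      by (rule G_split[OF assms(1-5) that s2])
    then show ?thesis unfolding x'_def G_def by (simp add: algebra_simps)
  qed
  have opt1: "optimal T a I1 S1 x'"
    unfolding optimal_def
  proof (intro conjI allI impI)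
    show "S1 \<subseteq> VI T a I1" by (rule s1)
    fix T1 assume t: "T1 \<subseteq> VI T a I1"
    have "T1 \<union> S2 \<subseteq> VI T a (I1 \<union> I2)" using t s2 unfolding VI_Un by blast
    then have "G T (T1 \<union> S2) x \<le> G T S x" using opt unfolding optimal_def by blast
    then show "G T T1 x' \<le> G T S1 x'" using key[OF t] key[OF s1] SS by simp
  qed
  have "\<not> (\<exists>S'. S1 \<subset> S' \<and> optimal T a I1 S' x')"
  proof
    assume "\<exists>S'. S1 \<subset> S' \<and> optimal T a I1 S' x'"
    then obtain T1 where t1: "S1 \<subset> T1" "optimal T a I1 T1 x'" by blast
    have t: "T1 \<subseteq> VI T a I1" using t1 unfolding optimal_def by blast
    have sub: "T1 \<union> S2 \<subseteq> VI T a (I1 \<union> I2)" using t s2 unfolding VI_Un by blast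
    have "G T S x = G T S1 x' + G T S2 x" using key[OF s1] SS by simp
    also have "\<dots> \<le> G T T1 x' + G T S2 x" using t1(2) s1 unfolding optimal_def by auto
    also have "\<dots> = G T (T1 \<union> S2) x" using key[OF t] by simp
    finally have ge: "G T S x \<le> G T (T1 \<union> S2) x" .
    have "optimal T a (I1 \<union> I2) (T1 \<union> S2) x"
      unfolding optimal_def
    proof (intro conjI allI impI)
      show "T1 \<union> S2 \<subseteq> VI T a (I1 \<union> I2)" by (rule sub)
      fix S' assume "S' \<subseteq> VI T a (I1 \<union> I2)"
      then have "G T S' x \<le> G T S x" using opt unfolding optimal_def by blast
      then show "G T S' x \<le> G T (T1 \<union> S2) x" using ge by linarith
    qed
    moreover have "S \<subset> T1 \<union> S2"
    proof -
      obtain t0 where "t0 \<in> T1" "t0 \<notin> S1" using t1(1) by blast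
      moreover have "t0 \<notin> S2" using \<open>t0 \<in> T1\<close> t s2 VI_disj[OF assms(1,3,4,5)] by blast
      ultimately show ?thesis using SS t1(1) by blast
    qed
    ultimately show False using mx by blast
  qed
  then show ?thesis using x' opt1 unfolding matr_def S1_def by blast
qed

theorem proposition7:
  fixes T :: "'a wtree" and a :: 'a and I I1 I2 :: "'a option set"
  assumes "is_wtree T" and "a \<in> nodes T"
    and "I \<subseteq> idx T a" and "I = I1 \<union> I2" and "I1 \<inter> I2 = {}"
  shows "(\<forall>S\<in>matr T a I. S \<inter> VI T a I1 \<in> matr T a I1 \<and> S \<inter> VI T a I2 \<in> matr T a I2)
       \<and> matr T a (idx T a) \<subseteq>
           {\<Union>i\<in>idx T a. Si i | Si. \<forall>i\<in>idx T a. Si i \<in> matr T a {i}}"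
proof (intro conjI ballI subsetI)
  have i1: "I1 \<subseteq> idx T a" and i2: "I2 \<subseteq> idx T a" using assms(3,4) by auto
  fix S assume S: "S \<in> matr T a I"
  show "S \<inter> VI T a I1 \<in> matr T a I1" using half[OF assms(1,2) i1 i2 assms(5)] S assms(4) by simp
  have "S \<in> matr T a (I2 \<union> I1)" using S assms(4) by (simp add: Un_commute)
  then show "S \<inter> VI T a I2 \<in> matr T a I2" using half[OF assms(1,2) i2 i1] assms(5) by (simp add: Int_commute)
next
  fix S assume S: "S \<in> matr T a (idx T a)"
  define Si where "Si i = S \<inter> VI T a {i}" for i
  have "Si i \<in> matr T a {i}" if "i \<in> idx T a" for i
  proof -
    have e: "idx T a = {i} \<union> (idx T a - {i})" using that by auto
    have "S \<in> matr T a ({i} \<union> (idx T a - {i}))" using S e by simp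
    then show ?thesis unfolding Si_def using half[OF assms(1,2), of "{i}" "idx T a - {i}"] that by auto
  qed
  moreover have "S = (\<Union>i\<in>idx T a. Si i)"
  proof -
    have "S \<subseteq> VI T a (idx T a)" using S unfolding matr_def optimal_def by blast
    then show ?thesis unfolding Si_def VI_def by auto
  qed
  ultimately show "S \<in> {\<Union>i\<in>idx T a. Si i | Si. \<forall>i\<in>idx T a. Si i \<in> matr T a {i}}" by blast
qed

end
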